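(* A rooted labeled forest that avoids $123$ avoids $3142$ if and only if it is a $P_2$-forest.
   Context: Rooted labeled forests are unordered forests with a distinguished root in each component and distinct integer labels $L(v)$. The ancestors of $v$ are the vertices on the path from the root of its component to $v$ (including $v$). An instance of a pattern $\pi$ of length $k$ is a sequence $v_1,\dots,v_k$ with $v_i$ a strict ancestor of $v_{i+1}$ and labels in the same relative order as $\pi$; a forest avoids $\pi$ if it has no instance. A vertex $v$ is a top-down minimum (TDM) if $L(u)\ge L(v)$ for every ancestor $u$ of $v$; other vertices are non-TDM. For a non-TDM vertex $v$, its segment is the set of TDM ancestors $u$ of $v$ with $L(u)<L(v)$ (these are the TDM vertices on the path from some vertex down to $v$); the top of the segment is the vertex of the segment closest to the root (equivalently, the one with the greatest label). Two vertices are comparable if one is an ancestor of the other. A $P_2$-forest is a forest in which, whenever two comparable non-TDM vertices have intersecting segments, the tops of their segments coincide. *)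

theory Defs
  imports Main
begin

text \<open>A rooted forest on a finite vertex set V is given by a partial parent map
  par: par v = None means v is a root; par v = Some u means u is the parent of v.\<close>

definition parent_rel :: "'a set \<Rightarrow> ('a \<Rightarrow> 'a option) \<Rightarrow> ('a \<times> 'a) set" where
  "parent_rel V par = {(v, u). v \<in> V \<and> par v = Some u}"

definition rooted_forest :: "'a set \<Rightarrow> ('a \<Rightarrow> 'a option) \<Rightarrow> bool" where
  "rooted_forest V par \<longleftrightarrow> finite V \<and>
     (\<forall>v\<in>V. \<forall>u. par v = Some u \<longrightarrow> u \<in> V) \<and> acyclic (parent_rel V par)"

definition anc :: "'a set \<Rightarrow> ('a \<Rightarrow> 'a option) \<Rightarrow> 'a \<Rightarrow> 'a \<Rightarrow> bool" where
  "anc V par u v \<longleftrightarrow> v \<in> V \<and> (v, u) \<in> (parent_rel V par)\<^sup>*"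

definition strict_anc :: "'a set \<Rightarrow> ('a \<Rightarrow> 'a option) \<Rightarrow> 'a \<Rightarrow> 'a \<Rightarrow> bool" where
  "strict_anc V par u v \<longleftrightarrow> v \<in> V \<and> (v, u) \<in> (parent_rel V par)\<^sup>+"

definition contains_pattern ::
  "'a set \<Rightarrow> ('a \<Rightarrow> 'a option) \<Rightarrow> ('a \<Rightarrow> int) \<Rightarrow> nat list \<Rightarrow> bool" where
  "contains_pattern V par L pi \<longleftrightarrow>
     (\<exists>vs. length vs = length pi \<and> set vs \<subseteq> V \<and>
        (\<forall>i. i + 1 < length vs \<longrightarrow> strict_anc V par (vs ! i) (vs ! (i + 1))) \<and>
        (\<forall>i < length vs. \<forall>j < length vs. L (vs ! i) < L (vs ! j) \<longleftrightarrow> pi ! i < pi ! j))"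

definition avoids :: "'a set \<Rightarrow> ('a \<Rightarrow> 'a option) \<Rightarrow> ('a \<Rightarrow> int) \<Rightarrow> nat list \<Rightarrow> bool" where
  "avoids V par L pi \<longleftrightarrow> \<not> contains_pattern V par L pi"

definition TDM :: "'a set \<Rightarrow> ('a \<Rightarrow> 'a option) \<Rightarrow> ('a \<Rightarrow> int) \<Rightarrow> 'a \<Rightarrow> bool" where
  "TDM V par L v \<longleftrightarrow> v \<in> V \<and> (\<forall>u. anc V par u v \<longrightarrow> L u \<ge> L v)"

definition segment :: "'a set \<Rightarrow> ('a \<Rightarrow> 'a option) \<Rightarrow> ('a \<Rightarrow> int) \<Rightarrow> 'a \<Rightarrow> 'a set" where
  "segment V par L v = {u. anc V par u v \<and> TDM V par L u \<and> L u < L v}"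

definition seg_top :: "'a set \<Rightarrow> ('a \<Rightarrow> 'a option) \<Rightarrow> ('a \<Rightarrow> int) \<Rightarrow> 'a \<Rightarrow> 'a" where
  "seg_top V par L v =
     (THE u. u \<in> segment V par L v \<and> (\<forall>w\<in>segment V par L v. L w \<le> L u))"

definition comparable :: "'a set \<Rightarrow> ('a \<Rightarrow> 'a option) \<Rightarrow> 'a \<Rightarrow> 'a \<Rightarrow> bool" where
  "comparable V par u v \<longleftrightarrow> anc V par u v \<or> anc V par v u"

definition P2_forest :: "'a set \<Rightarrow> ('a \<Rightarrow> 'a option) \<Rightarrow> ('a \<Rightarrow> int) \<Rightarrow> bool" where
  "P2_forest V par L \<longleftrightarrow>
     (\<forall>v\<in>V. \<forall>w\<in>V. \<not> TDM V par L v \<longrightarrow> \<not> TDM V par L w \<longrightarrow> comparable V par v w \<longrightarrow>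
        segment V par L v \<inter> segment V par L w \<noteq> {} \<longrightarrow>
        seg_top V par L v = seg_top V par L w)"

end

theory Submission
  imports Defs
begin

lemma pr_V: "(x, y) \<in> parent_rel V par \<Longrightarrow> rooted_forest V par \<Longrightarrow> x \<in> V \<and> y \<in> V"
  by (auto simp: parent_rel_def rooted_forest_def)

lemma anc_V:
  assumes "rooted_forest V par" "anc V par u v" shows "u \<in> V" "v \<in> V"
proof -
  have "(v, u) \<in> (parent_rel V par)\<^sup>*" "v \<in> V" using assms(2) by (auto simp: anc_def)
  then show "u \<in> V"
    by (induction rule: rtrancl_induct) (auto dest: pr_V[OF _ assms(1)])
  show "v \<in> V" using assms(2) by (auto simp: anc_def)
qed

lemma anc_trans: "anc V par u v \<Longrightarrow> anc V par w u \<Longrightarrow> anc V par w v"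
  by (auto simp: anc_def intro: rtrancl_trans)

lemma anc_refl: "v \<in> V \<Longrightarrow> anc V par v v"
  by (auto simp: anc_def)

lemma strict_anc_iff:
  assumes "rooted_forest V par"
  shows "strict_anc V par u v \<longleftrightarrow> anc V par u v \<and> u \<noteq> v"
proof
  assume h: "strict_anc V par u v"
  have ac: "acyclic (parent_rel V par)" using assms by (simp add: rooted_forest_def)
  from h show "anc V par u v \<and> u \<noteq> v"
    using ac by (auto simp: strict_anc_def anc_def acyclic_def)
next
  assume "anc V par u v \<and> u \<noteq> v"
  then show "strict_anc V par u v"
    by (auto simp: strict_anc_def anc_def rtrancl_eq_or_trancl)
qed

lemma anc_linear:
  assumes rf: "rooted_forest V par" and "anc V par u w" "anc V par u' w"
  shows "anc V par u u' \<or> anc V par u' u"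
proof -
  have sv: "single_valued (parent_rel V par)"
    by (auto simp: single_valued_def parent_rel_def)
  have "(w, u) \<in> (parent_rel V par)\<^sup>*" "(w, u') \<in> (parent_rel V par)\<^sup>*"
    using assms by (auto simp: anc_def)
  then have "(u, u') \<in> (parent_rel V par)\<^sup>* \<or> (u', u) \<in> (parent_rel V par)\<^sup>*"
    using single_valued_confluent[OF sv] by blast
  moreover have "u \<in> V" "u' \<in> V"
    using anc_V[OF rf] assms by auto
  ultimately show ?thesis by (auto simp: anc_def)
qed


lemma tdm_exists:
  assumes rf: "rooted_forest V par" and b: "b \<in> V"
  shows "\<exists>m. anc V par m b \<and> TDM V par L m \<and> L m \<le> L b"
proof -
  define A where "A = {u. anc V par u b}"
  have fin: "finite A" using rf anc_V[OF rf]
    by (auto simp: A_def rooted_forest_def intro: finite_subset)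
  have bA: "b \<in> A" using b by (simp add: A_def anc_refl)
  have "Min (L ` A) \<in> L ` A" using fin bA by (intro Min_in) auto
  then obtain m where mA: "m \<in> A" and mL: "L m = Min (L ` A)" by auto
  have le: "L m \<le> L u" if "u \<in> A" for u using that fin mL by simp
  have "TDM V par L m"
    unfolding TDM_def
  proof (intro conjI allI impI)
    show "m \<in> V" using mA anc_V[OF rf] by (auto simp: A_def)
    fix u assume "anc V par u m"
    then have "u \<in> A" using mA anc_trans by (auto simp: A_def)
    then show "L m \<le> L u" by (rule le)
  qed
  then show ?thesis using mA le[OF bA] by (auto simp: A_def)
qed

lemma seg_top_props:
  assumes rf: "rooted_forest V par" and inj: "inj_on L V"
    and ne: "segment V par L v \<noteq> {}"
  shows "seg_top V par L v \<in> segment V par L v \<and>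
         (\<forall>w\<in>segment V par L v. L w \<le> L (seg_top V par L v))"
proof -
  let ?S = "segment V par L v"
  have SV: "?S \<subseteq> V" using anc_V[OF rf] by (auto simp: segment_def)
  have fin: "finite ?S" using rf SV by (auto simp: rooted_forest_def intro: finite_subset)
  have "Max (L ` ?S) \<in> L ` ?S" using fin ne by (intro Max_in) auto
  then obtain t where tS: "t \<in> ?S" and tL: "L t = Max (L ` ?S)" by auto
  have P: "t \<in> ?S \<and> (\<forall>w\<in>?S. L w \<le> L t)" using tS tL fin by simp
  have "seg_top V par L v = t"
    unfolding seg_top_def
  proof (rule the_equality)
    show "t \<in> ?S \<and> (\<forall>w\<in>?S. L w \<le> L t)" by (rule P)
    fix u assume u: "u \<in> ?S \<and> (\<forall>w\<in>?S. L w \<le> L u)"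
    then have "L u = L t" using P by force
    then show "u = t" using inj SV u tS by (auto dest: inj_onD)
  qed
  then show ?thesis using P by simp
qed

lemma lt3: "(i::nat) < 3 \<longleftrightarrow> i = 0 \<or> i = 1 \<or> i = 2" by auto
lemma lt4: "(i::nat) < 4 \<longleftrightarrow> i = 0 \<or> i = 1 \<or> i = 2 \<or> i = 3" by auto

lemma pat123I:
  assumes "a \<in> V" "b \<in> V" "c \<in> V" "strict_anc V par a b" "strict_anc V par b c"
    "L a < L b" "L b < L c"
  shows "contains_pattern V par L [1, 2, 3]"
  unfolding contains_pattern_def
proof (intro exI[of _ "[a, b, c]"] conjI allI impI)
  fix i assume "i + 1 < length [a, b, c]"
  then have "i = 0 \<or> i = 1" by auto
  then show "strict_anc V par ([a, b, c] ! i) ([a, b, c] ! (i + 1))" using assms by auto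
next
  fix i j assume "i < length [a, b, c]" "j < length [a, b, c]"
  then have "i < 3" "j < 3" by auto
  then show "(L ([a, b, c] ! i) < L ([a, b, c] ! j)) = (([1, 2, 3]::nat list) ! i < [1, 2, 3] ! j)"
    using assms unfolding lt3 by auto
qed (use assms in auto)

lemma pat3142I:
  assumes "a \<in> V" "b \<in> V" "c \<in> V" "d \<in> V" "strict_anc V par a b" "strict_anc V par b c"
    "strict_anc V par c d"
    "L b < L d" "L d < L a" "L a < L c"
  shows "contains_pattern V par L [3, 1, 4, 2]"
  unfolding contains_pattern_def
proof (intro exI[of _ "[a, b, c, d]"] conjI allI impI)
  fix i assume "i + 1 < length [a, b, c, d]"
  then have "i = 0 \<or> i = 1 \<or> i = 2" by auto
  then show "strict_anc V par ([a, b, c, d] ! i) ([a, b, c, d] ! (i + 1))" using assms by auto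
next
  fix i j assume "i < length [a, b, c, d]" "j < length [a, b, c, d]"
  then have "i < 4" "j < 4" by auto
  then show "(L ([a, b, c, d] ! i) < L ([a, b, c, d] ! j)) = (([3, 1, 4, 2]::nat list) ! i < [3, 1, 4, 2] ! j)"
    using assms unfolding lt4 by auto
qed (use assms in auto)

lemma pat3142D:
  assumes "contains_pattern V par L [3, 1, 4, 2]"
  shows "\<exists>a b c d. a \<in> V \<and> b \<in> V \<and> c \<in> V \<and> d \<in> V \<and> strict_anc V par a b \<and>
    strict_anc V par b c \<and> strict_anc V par c d \<and> L b < L d \<and> L d < L a \<and> L a < L c"
proof -
  obtain vs where len0: "length vs = length ([3, 1, 4, 2]::nat list)" and sub: "set vs \<subseteq> V"
    and sa: "\<forall>i. i + 1 < length vs \<longrightarrow> strict_anc V par (vs ! i) (vs ! (i + 1))"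
    and lab: "\<forall>i < length vs. \<forall>j < length vs. L (vs ! i) < L (vs ! j) \<longleftrightarrow> ([3, 1, 4, 2]::nat list) ! i < [3, 1, 4, 2] ! j"
    using assms unfolding contains_pattern_def by blast
  have len: "length vs = 4" using len0 by simp
  have inV: "vs ! i \<in> V" if "i < 4" for i using that len sub nth_mem by fastforce
  show ?thesis
    apply (rule exI[of _ "vs ! 0"], rule exI[of _ "vs ! 1"], rule exI[of _ "vs ! 2"], rule exI[of _ "vs ! 3"])
    using inV[of 0] inV[of 1] inV[of 2] inV[of 3] sa[rule_format, of 0] sa[rule_format, of 1] sa[rule_format, of 2]
      lab[rule_format, of 1 3] lab[rule_format, of 3 0] lab[rule_format, of 0 2] len
    by (simp add: numeral_2_eq_2 numeral_3_eq_3)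
qed


lemma tdm_anc_le: "TDM V par L y \<Longrightarrow> anc V par x y \<Longrightarrow> L y \<le> L x"
  by (auto simp: TDM_def)

lemma core:
  assumes rf: "rooted_forest V par" and inj: "inj_on L V"
    and a123: "avoids V par L [1, 2, 3]" and a3142: "avoids V par L [3, 1, 4, 2]"
    and vV: "v \<in> V" and wV: "w \<in> V"
    and nv: "\<not> TDM V par L v" and nw: "\<not> TDM V par L w"
    and vw: "anc V par v w"
    and sv: "s \<in> segment V par L v" and sw: "s \<in> segment V par L w"
  shows "seg_top V par L v = seg_top V par L w"
proof (rule ccontr)
  assume ne: "seg_top V par L v \<noteq> seg_top V par L w"
  define Tv where "Tv = seg_top V par L v"
  define Tw where "Tw = seg_top V par L w"
  have Tv: "Tv \<in> segment V par L v" "\<forall>x\<in>segment V par L v. L x \<le> L Tv"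
    using seg_top_props[OF rf inj, of v] sv unfolding Tv_def by auto
  have Tw: "Tw \<in> segment V par L w" "\<forall>x\<in>segment V par L w. L x \<le> L Tw"
    using seg_top_props[OF rf inj, of w] sw unfolding Tw_def by auto
  have TvV: "Tv \<in> V" and TwV: "Tw \<in> V" and sV: "s \<in> V"
    using Tv Tw sv anc_V[OF rf] by (auto simp: segment_def)
  have TvTw: "Tv \<noteq> Tw" using ne by (simp add: Tv_def Tw_def)
  then have LTvTw: "L Tv \<noteq> L Tw" using inj TvV TwV by (auto dest: inj_onD)
  have vnw: "v \<noteq> w" using ne by auto
  have Tva: "anc V par Tv v" "TDM V par L Tv" "L Tv < L v" using Tv by (auto simp: segment_def)
  have Twa: "anc V par Tw w" "TDM V par L Tw" "L Tw < L w" using Tw by (auto simp: segment_def)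
  have sa: "anc V par s v" "TDM V par L s" "L s < L v" "anc V par s w" "L s < L w"
    using sv sw by (auto simp: segment_def)
  have Tvw: "anc V par Tv w" using anc_trans[OF vw Tva(1)] .
  have sTv: "L s \<le> L Tv" using Tv(2) sv by auto
  have sTw: "L s \<le> L Tw" using Tw(2) sw by auto
  have Tvnv: "Tv \<noteq> v" using Tva(2) nv by auto
  have Twnw: "Tw \<noteq> w" using Twa(2) nw by auto
  have snv: "s \<noteq> v" using sa(2) nv by auto
  show False
  proof (cases "L Tw < L Tv")
    case True
    have Tvnw: "Tv \<noteq> w" using Tva(2) nw by auto
    then have "L Tv \<noteq> L w" using inj TvV wV by (auto dest: inj_onD)
    moreover have "\<not> L Tv < L w"
    proof
      assume "L Tv < L w"
      then have "Tv \<in> segment V par L w" using Tvw Tva(2) by (auto simp: segment_def)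
      then show False using Tw(2) True by auto
    qed
    ultimately have wTv: "L w < L Tv" by auto
    have "anc V par Tw s"
    proof -
      from anc_linear[OF rf Twa(1) sa(4)] show ?thesis
      proof
        assume "anc V par s Tw"
        then have "L Tw \<le> L s" using tdm_anc_le[OF Twa(2)] by auto
        then have "L s = L Tw" using sTw by auto
        then have "s = Tw" using inj sV TwV by (auto dest: inj_onD)
        then show ?thesis using TwV anc_refl by auto
      qed
    qed
    then have Twv: "anc V par Tw v" using anc_trans[OF sa(1)] by auto
    have TvTw2: "anc V par Tv Tw"
    proof -
      from anc_linear[OF rf Twa(1) Tvw] show ?thesis
      proof
        assume "anc V par Tw Tv"
        then have "L Tv \<le> L Tw" using tdm_anc_le[OF Tva(2)] by auto
        then show ?thesis using True by auto
      qed
    qed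
    have Twnv: "Tw \<noteq> v" using Twa(2) nv by auto
    have "contains_pattern V par L [3, 1, 4, 2]"
      by (rule pat3142I[of Tv V Tw v w])
        (use TvV TwV vV wV TvTw2 TvTw Twv Twnv vw vnw True wTv Twa Tva strict_anc_iff[OF rf] in auto)
    then show False using a3142 by (simp add: avoids_def)
  next
    case False
    then have lt: "L Tv < L Tw" using LTvTw by auto
    have "anc V par Tw s"
    proof -
      from anc_linear[OF rf Twa(1) sa(4)] show ?thesis
      proof
        assume "anc V par s Tw"
        then have "L Tw \<le> L s" using tdm_anc_le[OF Twa(2)] by auto
        then show ?thesis using sTv lt by auto
      qed
    qed
    then have Twv: "anc V par Tw v" using anc_trans[OF sa(1)] by auto
    have Twnv: "Tw \<noteq> v" using Twa(2) nv by auto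
    then have "L Tw \<noteq> L v" using inj TwV vV by (auto dest: inj_onD)
    moreover have "\<not> L Tw < L v"
    proof
      assume "L Tw < L v"
      then have "Tw \<in> segment V par L v" using Twv Twa(2) by (auto simp: segment_def)
      then show False using Tv(2) lt by auto
    qed
    ultimately have "L v < L Tw" by auto
    then have "contains_pattern V par L [1, 2, 3]"
      by (intro pat123I[of s V v w]) (use sV vV wV sa snv vw vnw Twa strict_anc_iff[OF rf] in auto)
    then show False using a123 by (simp add: avoids_def)
  qed
qed

theorem lemma3p15:
  fixes V :: "'a set" and par :: "'a \<Rightarrow> 'a option" and L :: "'a \<Rightarrow> int"
  assumes "rooted_forest V par"
    and "inj_on L V"
    and "avoids V par L [1, 2, 3]"
  shows "avoids V par L [3, 1, 4, 2] \<longleftrightarrow> P2_forest V par L"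
proof
  assume a: "avoids V par L [3, 1, 4, 2]"
  show "P2_forest V par L"
    unfolding P2_forest_def
  proof (intro ballI impI)
    fix v w assume vV: "v \<in> V" and wV: "w \<in> V" and nv: "\<not> TDM V par L v"
      and nw: "\<not> TDM V par L w" and c: "comparable V par v w"
      and i: "segment V par L v \<inter> segment V par L w \<noteq> {}"
    then obtain s where s: "s \<in> segment V par L v" "s \<in> segment V par L w" by auto
    from c show "seg_top V par L v = seg_top V par L w"
      unfolding comparable_def
    proof
      assume "anc V par v w"
      then show ?thesis using core[OF assms a vV wV nv nw _ s] by simp
    next
      assume "anc V par w v"
      then show ?thesis using core[OF assms a wV vV nw nv _ s(2) s(1)] by simp
    qed
  qed
next
  assume p2: "P2_forest V par L"
  show "avoids V par L [3, 1, 4, 2]"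
    unfolding avoids_def
  proof
    assume "contains_pattern V par L [3, 1, 4, 2]"
    then obtain a b c d where V: "a \<in> V" "b \<in> V" "c \<in> V" "d \<in> V"
      and s: "strict_anc V par a b" "strict_anc V par b c" "strict_anc V par c d"
      and l: "L b < L d" "L d < L a" "L a < L c"
      using pat3142D by blast
    have an: "anc V par a b" "anc V par b c" "anc V par c d"
      using s strict_anc_iff[OF assms(1)] by auto
    have ac: "anc V par a c" using anc_trans[OF an(2) an(1)] .
    have bd: "anc V par b d" using anc_trans[OF an(3) an(2)] .
    have aT: "TDM V par L a"
    proof (rule ccontr)
      assume "\<not> TDM V par L a"
      then obtain x where x: "anc V par x a" "L x < L a" using V by (auto simp: TDM_def)
      have "x \<in> V" using x anc_V[OF assms(1)] by auto
      have "contains_pattern V par L [1, 2, 3]"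
        by (rule pat123I[of x V a c]) (use x V \<open>x \<in> V\<close> ac l strict_anc_iff[OF assms(1)] in auto)
      then show False using assms(3) by (simp add: avoids_def)
    qed
    obtain m where m: "anc V par m b" "TDM V par L m" "L m \<le> L b"
      using tdm_exists[OF assms(1) V(2)] by blast
    have nc: "\<not> TDM V par L c" using an(2) l by (auto simp: TDM_def)
    have nd: "\<not> TDM V par L d" using bd l by (auto simp: TDM_def)
    have mc: "m \<in> segment V par L c" using m anc_trans[OF an(2) m(1)] l
      by (auto simp: segment_def)
    have md: "m \<in> segment V par L d" using m anc_trans[OF bd m(1)] l
      by (auto simp: segment_def)
    have cmp: "comparable V par c d" using an(3) by (simp add: comparable_def)
    have eq: "seg_top V par L c = seg_top V par L d"
      using p2 V nc nd cmp mc md unfolding P2_forest_def by blast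
    have tc: "\<forall>x\<in>segment V par L c. L x \<le> L (seg_top V par L c)"
      using seg_top_props[OF assms(1,2)] mc by blast
    have td: "seg_top V par L d \<in> segment V par L d"
      using seg_top_props[OF assms(1,2)] md by blast
    have "a \<in> segment V par L c" using ac aT l by (auto simp: segment_def)
    then have "L a \<le> L (seg_top V par L d)" using tc eq by auto
    moreover have "L (seg_top V par L d) < L d" using td by (auto simp: segment_def)
    ultimately show False using l by auto
  qed
qed

end
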